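(* Let $\mathcal R$ be a ring of subsets of a set $X$ (closed under finite intersections and finite unions) with $\mathcal R\subseteq\mathcal R_{seq}$. Then for every sequence $\{U_n:n\in\omega\}\subseteq\mathcal R$, the union $\bigcup_{n\in\omega}U_n$ belongs to $\mathcal R_{seq}$.
   Context: $\mathcal R_{seq}$ is the family of all sets $W$ for which there exist sequences $\{U_n\}_{n\in\omega}\subseteq\mathcal R$ and $\{V_n\}_{n\in\omega}\subseteq\mathcal R$ with $U_k\subseteq X\setminus V_k\subseteq U_{k+1}$ for every $k\in\omega$ and $\bigcup_nU_n=W$. *)

theory Defs
  imports Main
begin

definition subset_ring :: "'a set \<Rightarrow> 'a set set \<Rightarrow> bool" where
  "subset_ring X R \<longleftrightarrow> R \<subseteq> Pow X \<and>
     (\<forall>A\<in>R. \<forall>B\<in>R. A \<inter> B \<in> R \<and> A \<union> B \<in> R)"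

definition R_seq :: "'a set \<Rightarrow> 'a set set \<Rightarrow> 'a set set" where
  "R_seq X R = {W. \<exists>U V. (\<forall>n. U n \<in> R) \<and> (\<forall>n. V n \<in> R) \<and>
      (\<forall>k::nat. U k \<subseteq> X - V k \<and> X - V k \<subseteq> U (Suc k)) \<and>
      (\<Union>n. U n) = W}"

end

theory Submission
  imports Defs
begin

lemma ring_UN: "subset_ring X R \<Longrightarrow> (\<forall>n. f n \<in> R) \<Longrightarrow> (\<Union>n\<le>(k::nat). f n) \<in> R"
proof (induction k)
  case 0 then show ?case by simp
next
  case (Suc k)
  have "(\<Union>n\<le>Suc k. f n) = (\<Union>n\<le>k. f n) \<union> f (Suc k)" by (auto simp: atMost_Suc)
  with Suc show ?case unfolding subset_ring_def by auto
qed

lemma ring_INT: "subset_ring X R \<Longrightarrow> (\<forall>n. f n \<in> R) \<Longrightarrow> (\<Inter>n\<le>(k::nat). f n) \<in> R"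
proof (induction k)
  case 0 then show ?case by simp
next
  case (Suc k)
  have "(\<Inter>n\<le>Suc k. f n) = (\<Inter>n\<le>k. f n) \<inter> f (Suc k)" by (auto simp: atMost_Suc)
  with Suc show ?case unfolding subset_ring_def by auto
qed

theorem lemma2:
  fixes X :: "'a set" and R :: "'a set set"
  assumes "subset_ring X R"
    and "R \<subseteq> R_seq X R"
    and "\<forall>n::nat. U n \<in> R"
  shows "(\<Union>n. U n) \<in> R_seq X R"
proof -
  define P where "P = (\<lambda>n A B. (\<forall>k. A k \<in> R) \<and> (\<forall>k. B k \<in> R) \<and>
      (\<forall>k::nat. A k \<subseteq> X - B k \<and> X - B k \<subseteq> A (Suc k)) \<and> (\<Union>k. A k) = U n)"
  have "\<forall>n. \<exists>A B. P n A B"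
    using assms(2,3) unfolding R_seq_def P_def by blast
  then have "\<exists>A. \<forall>n. \<exists>B. P n (A n) B" by (rule choice)
  then obtain A where "\<forall>n. \<exists>B. P n (A n) B" by blast
  then have "\<exists>B. \<forall>n. P n (A n) (B n)" by (rule choice)
  then obtain B where PB: "\<forall>n. P n (A n) (B n)" by blast
  have AB: "\<And>n k. A n k \<in> R" "\<And>n k. B n k \<in> R"
    "\<And>n k. A n k \<subseteq> X - B n k" "\<And>n k. X - B n k \<subseteq> A n (Suc k)"
    "\<And>n. (\<Union>k. A n k) = U n"
    using PB unfolding P_def by auto
  have mono: "A n k \<subseteq> A n (k + d)" for n k d
  proof (induction d)
    case 0 show ?case by simp
  next
    case (Suc d)
    have "A n (k + d) \<subseteq> A n (Suc (k + d))" using AB(3,4) by blast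
    with Suc show ?case by simp
  qed
  define C where "C k = (\<Union>n\<le>k. A n k)" for k
  define D where "D k = (\<Inter>n\<le>k. B n k)" for k
  have C: "C k \<in> R" for k unfolding C_def by (rule ring_UN[OF assms(1)]) (simp add: AB(1))
  have D: "D k \<in> R" for k unfolding D_def by (rule ring_INT[OF assms(1)]) (simp add: AB(2))
  have "C k \<subseteq> X - D k" for k
  proof
    fix x assume "x \<in> C k"
    then obtain n where "n \<le> k" "x \<in> A n k" unfolding C_def by auto
    then show "x \<in> X - D k" using AB(3)[of n k] unfolding D_def by auto
  qed
  moreover have "X - D k \<subseteq> C (Suc k)" for k
  proof
    fix x assume "x \<in> X - D k"
    then obtain n where "n \<le> k" "x \<in> X - B n k" unfolding D_def by auto
    then show "x \<in> C (Suc k)" using AB(4)[of n k] unfolding C_def by auto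
  qed
  moreover have "(\<Union>k. C k) = (\<Union>n. U n)"
  proof
    show "(\<Union>k. C k) \<subseteq> (\<Union>n. U n)" unfolding C_def using AB(5) by blast
    show "(\<Union>n. U n) \<subseteq> (\<Union>k. C k)"
    proof
      fix x assume "x \<in> (\<Union>n. U n)"
      then obtain n k where x: "x \<in> A n k" using AB(5) by blast
      have "A n k \<subseteq> A n (k + n)" by (rule mono)
      then have "x \<in> C (k + n)" using x unfolding C_def by auto
      then show "x \<in> (\<Union>k. C k)" by blast
    qed
  qed
  ultimately show ?thesis unfolding R_seq_def using C D by (intro CollectI exI[of _ C] exI[of _ D]) auto
qed

end
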